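(* For any circuit-level Pauli error corresponding to $e\in\mathcal P_{n(T+1)}$ in the spacetime code of a Clifford circuit, its syndrome bitstring $\vec s(e)$ with respect to the parity checks $\mathcal O^\perp$ of the measurement outcomes of the circuit equals $(\langle e,M(\vec u)\rangle)_{\vec u\in\mathcal O^\perp}$, the binary commutators with the measured spacetime stabilizer generators.
   Context: Pauli operators are taken without phases; $\langle A,B\rangle=0$ if $A,B$ commute and $1$ otherwise. A non-adaptive Clifford circuit on $n$ qubits has time steps $t=1,\dots,T$: at step $t$, Pauli measurements (if any) are performed at time slice $t-0.5$ and then a Clifford unitary $U_t$ is applied. For $t\le t'$ let $U_{t,t'}=U_{t'-1}\cdots U_t$ (identity if $t'=t$). The spacetime code has $n(T+1)$ qubits $(q,t-0.5)$, $t=1,\dots,T+1$; for $F\in\mathcal P_{n(T+1)}$, $F_{t-0.5}\in\mathcal P_n$ is its component at slice $t-0.5$, and $\kappa_{t-0.5}(O)$ places $O\in\mathcal P_n$ at slice $t-0.5$ with identity elsewhere. Cumulant and back-cumulant: $(\overrightarrow F)_{t-0.5}=\prod_{t'=1}^{t}U_{t',t}F_{t'-0.5}U_{t',t}^\dagger$ and $(\overleftarrow F)_{t-0.5}=\prod_{t'=t}^{T+1}U_{t,t'}^\dagger F_{t'-0.5}U_{t,t'}$. A circuit error inserting $e_t$ before step $t$ is the spacetime Pauli $e=\prod_t\kappa_{t-0.5}(e_t)$. The input is a codeword of a stabilizer code with generators $S^{(\mathrm{ini})}_1,\dots,S^{(\mathrm{ini})}_s$ (values recorded perfectly at the start), and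 the circuit measures $M^{(\mathrm{circ})}_1,\dots,M^{(\mathrm{circ})}_m$. Let $\vec E=(S^{(\mathrm{ini})}_1,\dots,S^{(\mathrm{ini})}_s,M^{(\mathrm{circ})}_1,\dots,M^{(\mathrm{circ})}_m)$, with $t_j$ the time step of measurement $E_j$ ($t_j=0$ for initial stabilizers), and $\vec o\in\mathbb Z_2^{s+m}$ the outcome vector. $\mathcal O^\perp$ is a set of parity checks $\vec u\in\mathbb Z_2^{s+m}$ with $\vec u\cdot\vec o=0$ deterministically in the noiseless circuit; the syndrome of a run is $(\vec u\cdot\vec o)_{\vec u\in\mathcal O^\perp}$, and $\vec s(e)$ is the syndrome produced when error $e$ occurs. Measured spacetime stabilizer generators: $M(\vec u)=\overleftarrow{\prod_{j=s+1}^{s+m}\kappa_{t_j-0.5}(E_j^{u_j})}$. Known fact (effect of faults): with error $e$ the outcome distribution becomes $\mathbb P^{(e)}(\vec o)=\mathbb P(\vec o+\vec f(e))$, where $\mathbb P$ is the noiseless distribution, $f(e)_j=0$ for $j\le s$, and $f(e)_{s+i}=\langle(\overrightarrow e)_{t_{s+i}-0.5},M^{(\mathrm{circ})}_i\rangle$. *)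

theory Defs
  imports Main
begin

text \<open>A single-qubit Pauli without phase is a pair (x,z) of bits:
  I = (False,False), X = (True,False), Z = (False,True), Y = (True,True).
  An n-qubit Pauli on the qubit set 'q (finite, |'q| = n) is a map 'q to such pairs.\<close>

type_synonym 'q pauli = "'q \<Rightarrow> bool \<times> bool"

definition pid :: "'q pauli" where
  "pid = (\<lambda>q. (False, False))"

definition pmult :: "'q pauli \<Rightarrow> 'q pauli \<Rightarrow> 'q pauli" where
  "pmult A B = (\<lambda>q. (fst (A q) \<noteq> fst (B q), snd (A q) \<noteq> snd (B q)))"

definition pprod_list :: "'q pauli list \<Rightarrow> 'q pauli" where
  "pprod_list Ps = foldr pmult Ps pid"

definition anti1 :: "bool \<times> bool \<Rightarrow> bool \<times> bool \<Rightarrow> bool" where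
  "anti1 a b = ((fst a \<and> snd b) \<noteq> (snd a \<and> fst b))"

text \<open>Binary commutator \<langle>A,B\<rangle> (True = 1 = anticommute) of n-qubit Paulis.\<close>
definition pcomm :: "'q::finite pauli \<Rightarrow> 'q pauli \<Rightarrow> bool" where
  "pcomm A B = odd (card {q. anti1 (A q) (B q)})"

text \<open>Phaseless action P \<mapsto> U P U^dagger of a Clifford unitary: exactly a bijective map
  preserving products and commutators (symplectic automorphism).\<close>
definition clifford_action :: "('q::finite pauli \<Rightarrow> 'q pauli) \<Rightarrow> bool" where
  "clifford_action C \<longleftrightarrow> bij C \<and> (\<forall>A B. C (pmult A B) = pmult (C A) (C B))
     \<and> (\<forall>A B. pcomm (C A) (C B) = pcomm A B)"

text \<open>U t is the conjugation action of the Clifford U_t applied at step t.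
  Ucomp U t t' is the action of U_{t,t'} = U_{t'-1} ... U_t (identity if t' \<le> t),
  i.e. P \<mapsto> U_{t,t'} P U_{t,t'}^dagger.\<close>
fun Ucomp :: "(nat \<Rightarrow> 'q pauli \<Rightarrow> 'q pauli) \<Rightarrow> nat \<Rightarrow> nat \<Rightarrow> 'q pauli \<Rightarrow> 'q pauli" where
  "Ucomp U t 0 = id"
| "Ucomp U t (Suc k) = (if Suc k \<le> t then id else U k \<circ> Ucomp U t k)"

text \<open>A spacetime Pauli F : nat \<Rightarrow> 'q pauli; F t is the component at time slice t - 0.5,
  for t = 1..T+1; components outside that range are the identity.\<close>
definition spacetime_pauli :: "nat \<Rightarrow> (nat \<Rightarrow> 'q pauli) \<Rightarrow> bool" where
  "spacetime_pauli T F \<longleftrightarrow> (\<forall>t. t \<notin> {1..T+1} \<longrightarrow> F t = pid)"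

definition stcomm :: "nat \<Rightarrow> (nat \<Rightarrow> 'q::finite pauli) \<Rightarrow> (nat \<Rightarrow> 'q pauli) \<Rightarrow> bool" where
  "stcomm T A B = odd (card {(q, t). t \<in> {1..T+1} \<and> anti1 (A t q) (B t q)})"

definition kappa :: "nat \<Rightarrow> 'q pauli \<Rightarrow> nat \<Rightarrow> 'q pauli" where
  "kappa t P = (\<lambda>t'. if t' = t then P else pid)"

text \<open>Cumulant: (F\<rightarrow>)_{t-0.5} = prod_{t'=1}^{t} U_{t',t} F_{t'-0.5} U_{t',t}^dagger.\<close>
definition cumulant :: "nat \<Rightarrow> (nat \<Rightarrow> 'q pauli \<Rightarrow> 'q pauli) \<Rightarrow> (nat \<Rightarrow> 'q pauli) \<Rightarrow> nat \<Rightarrow> 'q pauli" where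
  "cumulant T U F t = (if t \<in> {1..T+1}
      then pprod_list (map (\<lambda>t'. Ucomp U t' t (F t')) [1..<t+1]) else pid)"

text \<open>Back-cumulant: (F\<leftarrow>)_{t-0.5} = prod_{t'=t}^{T+1} U_{t,t'}^dagger F_{t'-0.5} U_{t,t'}.\<close>
definition back_cumulant :: "nat \<Rightarrow> (nat \<Rightarrow> 'q pauli \<Rightarrow> 'q pauli) \<Rightarrow> (nat \<Rightarrow> 'q pauli) \<Rightarrow> nat \<Rightarrow> 'q pauli" where
  "back_cumulant T U F t = (if t \<in> {1..T+1}
      then pprod_list (map (\<lambda>t'. inv (Ucomp U t t') (F t')) [t..<T+2]) else pid)"

text \<open>Measurements are indexed 0..s+m-1;
  indices < s are the initial stabilizers, index s+i (i < m) is the circuit measurement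
  Mc i performed at time step tm i (slice tm i - 0.5).\<close>
definition Mgen :: "nat \<Rightarrow> (nat \<Rightarrow> 'q pauli \<Rightarrow> 'q pauli) \<Rightarrow> nat \<Rightarrow> nat \<Rightarrow> (nat \<Rightarrow> 'q pauli)
     \<Rightarrow> (nat \<Rightarrow> nat) \<Rightarrow> (nat \<Rightarrow> bool) \<Rightarrow> nat \<Rightarrow> 'q pauli" where
  "Mgen T U s m Mc tm u = back_cumulant T U
     (\<lambda>t. pprod_list (map (\<lambda>i. kappa (tm i) (if u (s + i) then Mc i else pid) t) [0..<m]))"

text \<open>Flip vector f(e) of the measurement outcomes caused by the circuit error e
  (the known fact on the effect of faults): f(e)_j = 0 for j < s and
  f(e)_{s+i} = \<langle>(e\<rightarrow>)_{t_{s+i}-0.5}, Mc i\<rangle>.\<close>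
definition flip :: "nat \<Rightarrow> (nat \<Rightarrow> 'q::finite pauli \<Rightarrow> 'q pauli) \<Rightarrow> nat \<Rightarrow> (nat \<Rightarrow> 'q pauli)
     \<Rightarrow> (nat \<Rightarrow> nat) \<Rightarrow> (nat \<Rightarrow> 'q pauli) \<Rightarrow> nat \<Rightarrow> bool" where
  "flip T U s Mc tm e j = (if j < s then False
      else pcomm (cumulant T U e (tm (j - s))) (Mc (j - s)))"

text \<open>Syndrome bit of check u under error e: since u\<cdot>o = 0 in the noiseless circuit and
  the outcome distribution with error e is P(o + f(e)), the (deterministic) syndrome bit
  is u \<cdot> f(e) over Z_2.\<close>
definition syndrome :: "nat \<Rightarrow> (nat \<Rightarrow> 'q::finite pauli \<Rightarrow> 'q pauli) \<Rightarrow> nat \<Rightarrow> nat \<Rightarrow> (nat \<Rightarrow> 'q pauli)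
     \<Rightarrow> (nat \<Rightarrow> nat) \<Rightarrow> (nat \<Rightarrow> 'q pauli) \<Rightarrow> (nat \<Rightarrow> bool) \<Rightarrow> bool" where
  "syndrome T U s m Mc tm e u = odd (card {j. j < s + m \<and> u j \<and> flip T U s Mc tm e j})"

end

theory Submission
  imports Defs
begin

lemma card_as_sum: "card {x\<in>S. P x} = (\<Sum>x\<in>S. of_bool (P x) :: nat)" if "finite S"
proof -
  have "{x\<in>S. P x} = S \<inter> {x. P x}" by blast
  thus ?thesis using that by simp
qed

lemma odd_card_xor:
  assumes "finite S"
  shows "odd (card {x\<in>S. P x \<noteq> Q x}) = (odd (card {x\<in>S. P x}) \<noteq> odd (card {x\<in>S. Q x}))"
proof -
  have "(\<Sum>x\<in>S. of_bool (P x \<noteq> Q x) + 2 * of_bool (P x \<and> Q x) :: nat)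
      = (\<Sum>x\<in>S. of_bool (P x) + of_bool (Q x))"
    by (rule sum.cong) auto
  hence "(\<Sum>x\<in>S. of_bool (P x \<noteq> Q x) :: nat) + 2 * (\<Sum>x\<in>S. of_bool (P x \<and> Q x))
      = (\<Sum>x\<in>S. of_bool (P x)) + (\<Sum>x\<in>S. of_bool (Q x))"
    by (simp only: sum.distrib sum_distrib_left)
  hence e: "card {x\<in>S. P x \<noteq> Q x} + 2 * card {x\<in>S. P x \<and> Q x} = card {x\<in>S. P x} + card {x\<in>S. Q x}"
    using assms by (simp only: card_as_sum)
  have "odd (card {x\<in>S. P x \<noteq> Q x}) = odd (card {x\<in>S. P x \<noteq> Q x} + 2 * card {x\<in>S. P x \<and> Q x})"
    by simp
  also have "\<dots> = odd (card {x\<in>S. P x} + card {x\<in>S. Q x})" by (simp only: e)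
  finally show ?thesis by simp
qed

lemma anti1_mult: "anti1 a (fst b \<noteq> fst c, snd b \<noteq> snd c) = (anti1 a b \<noteq> anti1 a c)"
  unfolding anti1_def by auto

lemma anti1_sym: "anti1 a b = anti1 b a"
  unfolding anti1_def by auto

lemma pcomm_sym: "pcomm A B = pcomm B A"
  unfolding pcomm_def by (simp add: anti1_sym)

lemma pcomm_mult: "pcomm (A::'q::finite pauli) (pmult B C) = (pcomm A B \<noteq> pcomm A C)"
proof -
  have "{q. anti1 (A q) (pmult B C q)} = {q\<in>UNIV. anti1 (A q) (B q) \<noteq> anti1 (A q) (C q)}"
    unfolding pmult_def anti1_mult by simp
  thus ?thesis unfolding pcomm_def using odd_card_xor[of "UNIV::'q set"] by simp
qed

lemma pcomm_pid: "pcomm A pid = False"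
  unfolding pcomm_def pid_def anti1_def by simp

lemma pcomm_prod: "pcomm (A::'q::finite pauli) (pprod_list Ps) = odd (\<Sum>P\<leftarrow>Ps. of_bool (pcomm A P) :: nat)"
  by (induction Ps) (auto simp: pprod_list_def pcomm_mult pcomm_pid)

lemma odd_sum_odd: "finite S \<Longrightarrow> odd (\<Sum>x\<in>S. of_bool (odd (f x)) :: nat) = odd (\<Sum>x\<in>S. f x :: nat)"
  by (induction S rule: finite_induct) (auto simp del: sum_of_bool_eq)

lemma pcomm_prod_upt: "pcomm (A::'q::finite pauli) (pprod_list (map f [a..<b])) = odd (\<Sum>t\<in>{a..<b}. of_bool (pcomm A (f t)) :: nat)"
  by (simp add: pcomm_prod sum_list_distinct_conv_sum_set del: sum_of_bool_eq)


lemma Ucomp_cliff: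
  assumes cliff: "\<And>t. t \<in> {1..T} \<Longrightarrow> clifford_action (U t)" and t1: "1 \<le> t"
  shows "k \<le> T+1 \<Longrightarrow> bij (Ucomp U t k) \<and> (\<forall>A B. pcomm (Ucomp U t k A) (Ucomp U t k B) = pcomm A B)"
proof (induction k)
  case 0
  then show ?case by (simp add: bij_id[unfolded id_def])
next
  case (Suc k)
  show ?case
  proof (cases "Suc k \<le> t")
    case True
    then show ?thesis by (simp add: bij_id[unfolded id_def])
  next
    case False
    hence "k \<in> {1..T}" using Suc.prems t1 by auto
    hence c: "clifford_action (U k)" by (rule cliff)
    have ih: "bij (Ucomp U t k) \<and> (\<forall>A B. pcomm (Ucomp U t k A) (Ucomp U t k B) = pcomm A B)"
      using Suc by simp
    show ?thesis using False c ih unfolding clifford_action_def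
      using bij_comp[of "Ucomp U t k" "U k"] by (auto simp: comp_def)
  qed
qed

lemma pcomm_inv:
  assumes "bij V" "\<forall>A B. pcomm (V A) (V B) = pcomm A B"
  shows "pcomm A (inv V B) = pcomm (V A) B"
proof -
  have "V (inv V B) = B" using assms(1) by (simp add: bij_is_surj surj_f_inv_f)
  thus ?thesis using assms(2) by metis
qed

lemma pcomm_kappa: "pcomm X (kappa a (if b then P else pid) t) = (a = t \<and> b \<and> pcomm X P)"
  by (auto simp: kappa_def pcomm_pid)

lemma inner_delta:
  fixes a :: nat
  assumes "a < N"
  shows "(\<Sum>t\<in>{1..<N}. \<Sum>t'\<in>{t..<N}. of_bool (a = t' \<and> b \<and> h t t') :: nat)
       = of_bool b * (\<Sum>t\<in>{1..<a+1}. of_bool (h t a))"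
proof -
  have "(\<Sum>t'\<in>{t..<N}. of_bool (a = t' \<and> b \<and> h t t') :: nat)
        = (if t \<le> a then of_bool b * of_bool (h t a) else 0)" for t
  proof -
    have "(\<Sum>t'\<in>{t..<N}. of_bool (a = t' \<and> b \<and> h t t') :: nat)
        = (\<Sum>t'\<in>{t..<N}. if a = t' then of_bool b * of_bool (h t a) else 0)"
      by (rule sum.cong) auto
    also have "\<dots> = (if t \<le> a then of_bool b * of_bool (h t a) else 0)"
      using assms by (simp add: sum.delta')
    finally show ?thesis .
  qed
  hence "(\<Sum>t\<in>{1..<N}. \<Sum>t'\<in>{t..<N}. of_bool (a = t' \<and> b \<and> h t t') :: nat)
       = (\<Sum>t\<in>{1..<N}. if t \<le> a then of_bool b * of_bool (h t a) else 0)" by simp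
  also have "\<dots> = (\<Sum>t\<in>{t\<in>{1..<N}. t \<le> a}. of_bool b * of_bool (h t a))"
    by (simp only: sum.inter_filter[symmetric] finite_atLeastLessThan)
  also have "{t\<in>{1..<N}. t \<le> a} = {1..<a+1}" using assms by auto
  finally show ?thesis by (simp only: sum_distrib_left)
qed


theorem lemma14:
  fixes T s m :: nat
    and U :: "nat \<Rightarrow> 'q::finite pauli \<Rightarrow> 'q pauli"
    and Sini :: "nat \<Rightarrow> 'q pauli"
    and Mc :: "nat \<Rightarrow> 'q pauli"
    and tm :: "nat \<Rightarrow> nat"
    and Operp :: "(nat \<Rightarrow> bool) set"
    and e :: "nat \<Rightarrow> 'q pauli"
  assumes cliff: "\<And>t. t \<in> {1..T} \<Longrightarrow> clifford_action (U t)"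
    and tm_range: "\<And>i. i < m \<Longrightarrow> tm i \<in> {1..T}"
    and Operp_supp: "\<And>u j. u \<in> Operp \<Longrightarrow> s + m \<le> j \<Longrightarrow> \<not> u j"
    and e_st: "spacetime_pauli T e"
  shows "\<forall>u \<in> Operp. syndrome T U s m Mc tm e u = stcomm T e (Mgen T U s m Mc tm u)"
proof
  fix u assume "u \<in> Operp"
  define g where "g i t = pcomm (Ucomp U t (tm i) (e t)) (Mc i)" for i t
  define R where "R = odd (\<Sum>i\<in>{..<m}. of_bool (u (s+i)) * (\<Sum>t\<in>{1..<tm i+1}. of_bool (g i t)) :: nat)"
  have V: "bij (Ucomp U t k) \<and> (\<forall>A B. pcomm (Ucomp U t k A) (Ucomp U t k B) = pcomm A B)"
    if "1 \<le> t" "k \<le> T+1" for t k using Ucomp_cliff[of T U t k, OF cliff that(1) that(2)] by blast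
  have cum: "pcomm (cumulant T U e (tm i)) (Mc i) = odd (\<Sum>t\<in>{1..<tm i+1}. of_bool (g i t) :: nat)"
    if "i < m" for i
  proof -
    have "tm i \<in> {1..T+1}" using tm_range[OF that] by auto
    hence "pcomm (cumulant T U e (tm i)) (Mc i) = pcomm (Mc i) (pprod_list (map (\<lambda>t'. Ucomp U t' (tm i) (e t')) [1..<tm i+1]))"
      by (simp add: cumulant_def pcomm_sym)
    also have "\<dots> = odd (\<Sum>t\<in>{1..<tm i+1}. of_bool (pcomm (Mc i) (Ucomp U t (tm i) (e t))) :: nat)"
      by (rule pcomm_prod_upt)
    finally show ?thesis by (simp add: g_def pcomm_sym del: sum_of_bool_eq)
  qed
  have setL: "{j. j < s + m \<and> u j \<and> flip T U s Mc tm e j}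
     = (\<lambda>i. s + i) ` {i\<in>{..<m}. u (s+i) \<and> pcomm (cumulant T U e (tm i)) (Mc i)}"
    by (auto simp: flip_def image_iff) (metis add_diff_inverse_nat add_less_cancel_left)
  have "syndrome T U s m Mc tm e u = odd (card {i\<in>{..<m}. u (s+i) \<and> pcomm (cumulant T U e (tm i)) (Mc i)})"
    unfolding syndrome_def setL by (subst card_image) (auto simp: inj_on_def)
  also have "\<dots> = odd (\<Sum>i\<in>{..<m}. of_bool (u (s+i) \<and> pcomm (cumulant T U e (tm i)) (Mc i)) :: nat)"
    by (simp only: card_as_sum finite_lessThan)
  also have "\<dots> = odd (\<Sum>i\<in>{..<m}. of_bool (odd (of_bool (u (s+i)) * (\<Sum>t\<in>{1..<tm i+1}. of_bool (g i t)) :: nat)) :: nat)"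
  proof (rule arg_cong[where f=odd], rule sum.cong[OF refl])
    fix i assume "i \<in> {..<m}"
    hence c: "pcomm (cumulant T U e (tm i)) (Mc i) = odd (\<Sum>t\<in>{1..<tm i+1}. of_bool (g i t) :: nat)"
      using cum by simp
    show "(of_bool (u (s+i) \<and> pcomm (cumulant T U e (tm i)) (Mc i)) :: nat)
       = of_bool (odd (of_bool (u (s+i)) * (\<Sum>t\<in>{1..<tm i+1}. of_bool (g i t)) :: nat))"
      unfolding c by (cases "u (s+i)") (simp_all only: of_bool_eq mult_1 mult_zero_left even_zero simp_thms)
  qed
  also have "\<dots> = R" unfolding R_def by (rule odd_sum_odd) simp
  finally have L: "syndrome T U s m Mc tm e u = R" .
  define M where "M = Mgen T U s m Mc tm u"
  define F where "F = (\<lambda>t. pprod_list (map (\<lambda>i. kappa (tm i) (if u (s + i) then Mc i else pid) t) [0..<m]))"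
  have M_eq: "M t = pprod_list (map (\<lambda>t'. inv (Ucomp U t t') (F t')) [t..<T+2])" if "t \<in> {1..T+1}" for t
    using that unfolding M_def Mgen_def back_cumulant_def F_def by simp
  have setR: "{(q, t). t \<in> {1..T+1} \<and> anti1 (e t q) (M t q)}
       = {p \<in> UNIV \<times> {1..<T+2}. anti1 (e (snd p) (fst p)) (M (snd p) (fst p))}" by auto
  have "stcomm T e M = odd (\<Sum>p\<in>UNIV \<times> {1..<T+2}. of_bool (anti1 (e (snd p) (fst p)) (M (snd p) (fst p))) :: nat)"
    unfolding stcomm_def setR by (subst card_as_sum) auto
  also have "(\<Sum>p\<in>UNIV \<times> {1..<T+2}. of_bool (anti1 (e (snd p) (fst p)) (M (snd p) (fst p))) :: nat)
      = (\<Sum>t\<in>{1..<T+2}. \<Sum>q\<in>UNIV. of_bool (anti1 (e t q) (M t q)))"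
  proof -
    have "(\<Sum>q\<in>UNIV. \<Sum>t\<in>{1..<T+2}. of_bool (anti1 (e t q) (M t q)) :: nat)
       = (\<Sum>(q,t)\<in>UNIV \<times> {1..<T+2}. of_bool (anti1 (e t q) (M t q)))"
      by (rule sum.cartesian_product)
    also have "\<dots> = (\<Sum>p\<in>UNIV \<times> {1..<T+2}. of_bool (anti1 (e (snd p) (fst p)) (M (snd p) (fst p))))"
      by (simp only: split_def)
    finally show ?thesis by (simp only: sum.swap[of _ UNIV])
  qed
  also have "\<dots> = (\<Sum>t\<in>{1..<T+2}. card {q\<in>UNIV. anti1 (e t q) (M t q)})"
    by (simp only: card_as_sum finite)
  finally have "stcomm T e M = odd (\<Sum>t\<in>{1..<T+2}. of_bool (pcomm (e t) (M t)) :: nat)"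
    unfolding pcomm_def by (simp only: odd_sum_odd finite_atLeastLessThan UNIV_I simp_thms)
  also have "\<dots> = odd (\<Sum>t\<in>{1..<T+2}. of_bool (odd (\<Sum>t'\<in>{t..<T+2}. of_bool (odd (\<Sum>i\<in>{..<m}. of_bool (tm i = t' \<and> u (s+i) \<and> pcomm (Ucomp U t t' (e t)) (Mc i)) :: nat)) :: nat)) :: nat)"
  proof (rule arg_cong[where f=odd], rule sum.cong[OF refl])
    fix t assume t: "t \<in> {1..<T+2}"
    have "pcomm (e t) (M t) = odd (\<Sum>t'\<in>{t..<T+2}. of_bool (pcomm (e t) (inv (Ucomp U t t') (F t'))) :: nat)"
    proof -
      have tt: "t \<in> {1..T+1}" using t by auto
      show ?thesis unfolding M_eq[OF tt] by (rule pcomm_prod_upt)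
    qed
    also have "\<dots> = odd (\<Sum>t'\<in>{t..<T+2}. of_bool (pcomm (Ucomp U t t' (e t)) (F t')) :: nat)"
    proof (rule arg_cong[where f=odd], rule sum.cong[OF refl])
      fix t' assume "t' \<in> {t..<T+2}"
      hence "1 \<le> t" "t' \<le> T+1" using t by auto
      from V[OF this] have b: "bij (Ucomp U t t')" and p: "\<forall>A B. pcomm (Ucomp U t t' A) (Ucomp U t t' B) = pcomm A B"
        by blast+
      show "of_bool (pcomm (e t) (inv (Ucomp U t t') (F t'))) = (of_bool (pcomm (Ucomp U t t' (e t)) (F t')) :: nat)"
        by (simp only: pcomm_inv[OF b p])
    qed
    also have "\<dots> = odd (\<Sum>t'\<in>{t..<T+2}. of_bool (odd (\<Sum>i\<in>{..<m}. of_bool (tm i = t' \<and> u (s+i) \<and> pcomm (Ucomp U t t' (e t)) (Mc i)) :: nat)) :: nat)"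
    proof (rule arg_cong[where f=odd], rule sum.cong[OF refl])
      fix t'
      have "pcomm (Ucomp U t t' (e t)) (F t') = odd (\<Sum>i\<in>{0..<m}. of_bool (pcomm (Ucomp U t t' (e t)) (kappa (tm i) (if u (s + i) then Mc i else pid) t')) :: nat)"
        unfolding F_def by (rule pcomm_prod_upt)
      also have "\<dots> = odd (\<Sum>i\<in>{..<m}. of_bool (tm i = t' \<and> u (s+i) \<and> pcomm (Ucomp U t t' (e t)) (Mc i)) :: nat)"
        by (simp only: pcomm_kappa atLeast0LessThan)
      finally show "of_bool (pcomm (Ucomp U t t' (e t)) (F t')) = (of_bool (odd (\<Sum>i\<in>{..<m}. of_bool (tm i = t' \<and> u (s+i) \<and> pcomm (Ucomp U t t' (e t)) (Mc i)) :: nat)) :: nat)"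
        by simp
    qed
    finally show "of_bool (pcomm (e t) (M t)) = (of_bool (odd (\<Sum>t'\<in>{t..<T+2}. of_bool (odd (\<Sum>i\<in>{..<m}. of_bool (tm i = t' \<and> u (s+i) \<and> pcomm (Ucomp U t t' (e t)) (Mc i)) :: nat)) :: nat)) :: nat)"
      by simp
  qed
  also have "\<dots> = odd (\<Sum>t\<in>{1..<T+2}. \<Sum>t'\<in>{t..<T+2}. \<Sum>i\<in>{..<m}. of_bool (tm i = t' \<and> u (s+i) \<and> pcomm (Ucomp U t t' (e t)) (Mc i)) :: nat)"
    by (simp only: odd_sum_odd finite_atLeastLessThan finite_lessThan)
  also have "(\<Sum>t\<in>{1..<T+2}. \<Sum>t'\<in>{t..<T+2}. \<Sum>i\<in>{..<m}. of_bool (tm i = t' \<and> u (s+i) \<and> pcomm (Ucomp U t t' (e t)) (Mc i)) :: nat)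
     = (\<Sum>i\<in>{..<m}. \<Sum>t\<in>{1..<T+2}. \<Sum>t'\<in>{t..<T+2}. of_bool (tm i = t' \<and> u (s+i) \<and> pcomm (Ucomp U t t' (e t)) (Mc i)))"
    by (simp only: sum.swap[of _ "{..<m}"])
  also have "\<dots> = (\<Sum>i\<in>{..<m}. of_bool (u (s+i)) * (\<Sum>t\<in>{1..<tm i+1}. of_bool (g i t)))"
  proof (rule sum.cong[OF refl])
    fix i assume "i \<in> {..<m}"
    hence "tm i < T+2" using tm_range by fastforce
    thus "(\<Sum>t\<in>{1..<T+2}. \<Sum>t'\<in>{t..<T+2}. of_bool (tm i = t' \<and> u (s+i) \<and> pcomm (Ucomp U t t' (e t)) (Mc i)) :: nat)
       = of_bool (u (s+i)) * (\<Sum>t\<in>{1..<tm i+1}. of_bool (g i t))"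
      unfolding g_def by (rule inner_delta)
  qed
  finally have "stcomm T e M = R" unfolding R_def .
  thus "syndrome T U s m Mc tm e u = stcomm T e (Mgen T U s m Mc tm u)" using L M_def by simp
qed

end
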